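(* Let $X$ be a compact metric space and $\tau_1,\dots,\tau_N:X\to X$ continuous maps with $X=\bigcup_{i=1}^N\tau_i(X)$, and suppose the system has an encoding map $\pi:\Omega\to X$ which is measurable from the cylinder $\sigma$-algebra of $\Omega$ to the Borel $\sigma$-algebra of $X$. Let $p_1,\dots,p_N>0$ with $\sum_ip_i=1$ and let $\mu_{(p)}$ be the Bernoulli measure on $\Omega$. Then $\nu:=\mu_{(p)}\circ\pi^{-1}$ satisfies $$\nu=\sum_{i=1}^Np_i\,\nu\circ\tau_i^{-1},$$ and the support of $\nu$ equals $X$.
   Context: $\Omega=\{1,\dots,N\}^{\mathbb{N}}$ with the $\sigma$-algebra generated by cylinder sets. An encoding: for every $\omega=(\omega_1\omega_2\dots)\in\Omega$, the set $\bigcap_{n\ge1}\tau_{\omega_1}\tau_{\omega_2}\cdots\tau_{\omega_n}(X)$ is a singleton $\{\pi(\omega)\}$. The Bernoulli measure $\mu_{(p)}$ is the unique probability measure on $\Omega$ with $\mu_{(p)}(\{\eta:\eta_1=\omega_1,\dots,\eta_n=\omega_n\})=p_{\omega_1}\cdots p_{\omega_n}$. *)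

theory Defs
  imports "HOL-Probability.Probability"
begin

text \<open>Symbols are indexed by 0..<N (the paper uses 1..N).
  The symbolic space Omega = {0..<N}^nat with the cylinder sigma-algebra.\<close>
definition Omega_space :: "nat \<Rightarrow> (nat \<Rightarrow> nat) measure" where
  "Omega_space N = PiM UNIV (\<lambda>_. count_space {..<N})"

definition bernoulli_measure :: "nat \<Rightarrow> (nat \<Rightarrow> real) \<Rightarrow> (nat \<Rightarrow> nat) measure" where
  "bernoulli_measure N p = PiM UNIV (\<lambda>_. point_measure {..<N} (\<lambda>i. ennreal (p i)))"

fun word_map :: "(nat \<Rightarrow> 'a \<Rightarrow> 'a) \<Rightarrow> (nat \<Rightarrow> nat) \<Rightarrow> nat \<Rightarrow> 'a \<Rightarrow> 'a" where
  "word_map tau w 0 = id"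
| "word_map tau w (Suc n) = word_map tau w n \<circ> tau (w n)"

definition is_encoding :: "'a set \<Rightarrow> nat \<Rightarrow> (nat \<Rightarrow> 'a \<Rightarrow> 'a) \<Rightarrow> ((nat \<Rightarrow> nat) \<Rightarrow> 'a) \<Rightarrow> bool" where
  "is_encoding X N tau \<pi> \<longleftrightarrow>
     (\<forall>\<omega> \<in> space (Omega_space N). (\<Inter>n\<in>{1..}. word_map tau \<omega> n ` X) = {\<pi> \<omega>})"

definition measure_support :: "'a::topological_space set \<Rightarrow> 'a measure \<Rightarrow> 'a set" where
  "measure_support X \<nu> = {x \<in> X. \<forall>U. open U \<and> x \<in> U \<longrightarrow> emeasure \<nu> (U \<inter> X) > 0}"

end

theory Submission
  imports Defs
begin

lemma wm_shift0: "word_map tau (case_nat s \<omega>) (Suc n) x = tau s (word_map tau \<omega> n x)"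
  by (induction n arbitrary: x) auto

lemma wm_shift: "word_map tau (case_nat s \<omega>) (Suc n) = tau s \<circ> word_map tau \<omega> n"
  using wm_shift0[of tau s \<omega> n] by (auto simp del: word_map.simps)

lemma wm_prefix: "(\<forall>i<n. \<eta> i = \<omega> i) \<Longrightarrow> word_map tau \<eta> n = word_map tau \<omega> n"
  by (induction n) auto

lemma wm_cont:
  assumes "\<And>i. i < N \<Longrightarrow> continuous_on X (tau i)" "\<And>i. i < N \<Longrightarrow> tau i ` X \<subseteq> X"
    and "\<And>i. \<omega> i < N"
  shows "continuous_on X (word_map tau \<omega> n) \<and> word_map tau \<omega> n ` X \<subseteq> X"
proof (induction n)
  case 0
  then show ?case by (simp add: continuous_on_id)
next
  case (Suc n)
  have c: "continuous_on X (tau (\<omega> n))" and s: "tau (\<omega> n) ` X \<subseteq> X" using assms by auto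
  have "continuous_on X (word_map tau \<omega> n \<circ> tau (\<omega> n))"
    using continuous_on_compose[OF c continuous_on_subset[OF Suc[THEN conjunct1] s]] .
  moreover have "(word_map tau \<omega> n \<circ> tau (\<omega> n)) ` X \<subseteq> X"
    using Suc s by (auto simp: image_comp[symmetric])
  ultimately show ?case by simp
qed

lemma wm_Suc_sub: "tau (\<omega> n) ` X \<subseteq> X \<Longrightarrow> word_map tau \<omega> (Suc n) ` X \<subseteq> word_map tau \<omega> n ` X"
  by (auto simp: image_comp[symmetric])

theorem lemma6p1:
  fixes X :: "'a::metric_space set"
    and N :: nat
    and tau :: "nat \<Rightarrow> 'a \<Rightarrow> 'a"
    and \<pi> :: "(nat \<Rightarrow> nat) \<Rightarrow> 'a"
    and p :: "nat \<Rightarrow> real"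
  assumes "compact X"
    and "\<And>i. i < N \<Longrightarrow> continuous_on X (tau i)"
    and "\<And>i. i < N \<Longrightarrow> tau i ` X \<subseteq> X"
    and "X = (\<Union>i<N. tau i ` X)"
    and "is_encoding X N tau \<pi>"
    and "\<pi> \<in> Omega_space N \<rightarrow>\<^sub>M restrict_space borel X"
    and "\<And>i. i < N \<Longrightarrow> p i > 0"
    and "(\<Sum>i<N. p i) = 1"
  shows "let \<nu> = distr (bernoulli_measure N p) (restrict_space borel X) \<pi> in
           (\<forall>A \<in> sets \<nu>. emeasure \<nu> A = (\<Sum>i<N. ennreal (p i) * emeasure \<nu> (tau i -` A \<inter> X)))
         \<and> measure_support X \<nu> = X"
proof -
  define M where "M = point_measure {..<N} (\<lambda>i. ennreal (p i))"
  define S where "S = PiM (UNIV::nat set) (\<lambda>_. M)"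
  have bS: "bernoulli_measure N p = S" by (simp add: bernoulli_measure_def S_def M_def)
  have probM: "prob_space M"
  proof
    have "emeasure M (space M) = (\<Sum>i<N. ennreal (p i))"
      by (simp add: M_def space_point_measure emeasure_point_measure_finite)
    also have "\<dots> = ennreal (\<Sum>i<N. p i)"
    proof (rule sum_ennreal)
      fix i assume "i \<in> {..<N}" then show "0 \<le> p i" using assms(7) by (simp add: less_imp_le)
    qed
    finally show "emeasure M (space M) = 1" using assms(8) by simp
  qed
  interpret sequence_space M
    by (simp add: sequence_space_def product_prob_space_def product_sigma_finite_def
        prob_space_imp_sigma_finite probM product_prob_space_axioms_def)
  have SS: "S = S" ..
  have spS: "space S = {\<omega>. \<forall>n. \<omega> n < N}"
    by (auto simp: S_def space_PiM M_def space_point_measure PiE_def extensional_def)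
  have setsO: "sets (Omega_space N) = sets S"
    unfolding Omega_space_def S_def M_def
    by (rule sets_PiM_cong) (auto simp: sets_point_measure)
  have piM: "\<pi> \<in> S \<rightarrow>\<^sub>M restrict_space borel X"
    using assms(6) measurable_cong_sets[OF setsO refl] by blast
  have spO: "space (Omega_space N) = space S"
    using sets_eq_imp_space_eq[OF setsO] .
  have piX: "\<pi> \<omega> \<in> X" if "\<omega> \<in> space S" for \<omega>
    using measurable_space[OF piM that] by (simp add: space_restrict_space)
  have enc: "(\<Inter>n\<in>{1..}. word_map tau \<omega> n ` X) = {\<pi> \<omega>}" if "\<omega> \<in> space S" for \<omega>
    using assms(5) that spO unfolding is_encoding_def by auto
  have shift: "\<pi> (case_nat s \<omega>) = tau s (\<pi> \<omega>)" if "\<omega> \<in> space S" "s < N" for \<omega> s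
  proof -
    have e1: "case_nat s \<omega> \<in> space S" using that spS by (auto split: nat.split)
    have "tau s (\<pi> \<omega>) \<in> word_map tau (case_nat s \<omega>) n ` X" if n: "n \<ge> 1" for n
    proof -
      obtain m where m: "n = Suc m" using n by (cases n) auto
      have "\<pi> \<omega> \<in> word_map tau \<omega> m ` X"
      proof (cases m)
        case 0 then show ?thesis using piX[OF \<open>\<omega> \<in> space S\<close>] by simp
      next
        case (Suc k)
        have "\<pi> \<omega> \<in> (\<Inter>n\<in>{1..}. word_map tau \<omega> n ` X)"
          using enc[OF \<open>\<omega> \<in> space S\<close>] by simp
        then show ?thesis using Suc by (auto simp del: word_map.simps)
      qed
      then show ?thesis unfolding m wm_shift by auto
    qed
    then have "tau s (\<pi> \<omega>) \<in> (\<Inter>n\<in>{1..}. word_map tau (case_nat s \<omega>) n ` X)" by auto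
    then have "tau s (\<pi> \<omega>) \<in> {\<pi> (case_nat s \<omega>)}" unfolding enc[OF e1] .
    then show ?thesis by simp
  qed
  define \<nu> where "\<nu> = distr S (restrict_space borel X) \<pi>"
  have part1: "emeasure \<nu> A = (\<Sum>i<N. ennreal (p i) * emeasure \<nu> (tau i -` A \<inter> X))"
    if A: "A \<in> sets \<nu>" for A
  proof -
    have A': "A \<in> sets (restrict_space borel X)" using A by (simp add: \<nu>_def)
    have tauA: "tau i -` A \<inter> X \<in> sets (restrict_space borel X)" if "i < N" for i
    proof -
      have "tau i \<in> restrict_space borel X \<rightarrow>\<^sub>M restrict_space borel X"
        using borel_measurable_continuous_on_restrict[OF assms(2)[OF that]] assms(3)[OF that]
        by (intro measurable_restrict_space2) (auto simp: space_restrict_space)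
      from measurable_sets[OF this A'] show ?thesis by (simp add: space_restrict_space)
    qed
    define f where "f = (\<lambda>(s::nat, \<omega>::nat\<Rightarrow>nat). case_nat s \<omega>)"
    have fm: "f \<in> (M \<Otimes>\<^sub>M S) \<rightarrow>\<^sub>M S"
      unfolding f_def S_def by measurable
    have B: "\<pi> -` A \<inter> space S \<in> sets S" using measurable_sets[OF piM A'] .
    define Z where "Z = f -` (\<pi> -` A \<inter> space S) \<inter> space (M \<Otimes>\<^sub>M S)"
    have Z: "Z \<in> sets (M \<Otimes>\<^sub>M S)" unfolding Z_def using measurable_sets[OF fm B] .
    have "emeasure \<nu> A = emeasure S (\<pi> -` A \<inter> space S)"
      unfolding \<nu>_def using emeasure_distr[OF piM A'] .
    also have "\<dots> = emeasure (distr (M \<Otimes>\<^sub>M S) S f) (\<pi> -` A \<inter> space S)"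
      unfolding f_def S_def by (subst PiM_iter) rule
    also have "\<dots> = emeasure (M \<Otimes>\<^sub>M S) Z"
      unfolding Z_def using emeasure_distr[OF fm B] .
    also have "\<dots> = (\<integral>\<^sup>+s. emeasure S (Pair s -` Z) \<partial>M)"
    proof -
      have Z': "Z \<in> sets (M \<Otimes>\<^sub>M PiM UNIV (\<lambda>i. M))" using Z by (simp add: S_def)
      show ?thesis using P.emeasure_pair_measure_alt[OF Z'] by (simp add: S_def)
    qed
    also have "\<dots> = (\<Sum>s<N. ennreal (p s) * emeasure S (Pair s -` Z))"
      unfolding M_def by (simp add: nn_integral_point_measure_finite)
    also have "\<dots> = (\<Sum>i<N. ennreal (p i) * emeasure \<nu> (tau i -` A \<inter> X))"
    proof (rule sum.cong[OF refl])
      fix s assume s: "s \<in> {..<N}"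
      have "Pair s -` Z = \<pi> -` (tau s -` A \<inter> X) \<inter> space S"
      proof -
        have "Pair s -` Z = {\<omega> \<in> space S. \<pi> (case_nat s \<omega>) \<in> A}"
          using s by (auto simp: Z_def f_def space_pair_measure M_def space_point_measure spS
              split: nat.split)
        also have "\<dots> = \<pi> -` (tau s -` A \<inter> X) \<inter> space S"
          using s by (auto simp: shift piX)
        finally show ?thesis .
      qed
      moreover have "emeasure \<nu> (tau s -` A \<inter> X) = emeasure S (\<pi> -` (tau s -` A \<inter> X) \<inter> space S)"
        unfolding \<nu>_def using emeasure_distr[OF piM tauA[of s]] s by simp
      ultimately show "ennreal (p s) * emeasure S (Pair s -` Z) = ennreal (p s) * emeasure \<nu> (tau s -` A \<inter> X)"
        by simp
    qed
    finally show ?thesis .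
  qed
  have part2: "measure_support X \<nu> = X"
  proof
    show "measure_support X \<nu> \<subseteq> X" by (auto simp: measure_support_def)
  next
    show "X \<subseteq> measure_support X \<nu>"
    proof
      fix x assume x: "x \<in> X"
      have "\<forall>y\<in>X. \<exists>c. fst c < N \<and> snd c \<in> X \<and> y = tau (fst c) (snd c)"
      proof
        fix y assume y: "y \<in> X"
        have "y \<in> (\<Union>i<N. tau i ` X)" using y by (simp only: assms(4)[symmetric])
        then obtain i z where "i < N" "z \<in> X" "y = tau i z" by blast
        then show "\<exists>c. fst c < N \<and> snd c \<in> X \<and> y = tau (fst c) (snd c)"
          by (intro exI[of _ "(i, z)"]) simp
      qed
      then obtain g where g: "\<And>y. y \<in> X \<Longrightarrow> fst (g y) < N \<and> snd (g y) \<in> X \<and> y = tau (fst (g y)) (snd (g y))"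
        by metis
      define xs where "xs = rec_nat x (\<lambda>_ y. snd (g y))"
      have xs0: "xs 0 = x" and xsS: "xs (Suc n) = snd (g (xs n))" for n by (simp_all add: xs_def)
      have xsX: "xs n \<in> X" for n
        by (induction n) (use x g in \<open>auto simp: xs0 xsS\<close>)
      define \<omega> where "\<omega> = (\<lambda>n. fst (g (xs n)))"
      have \<omega>N: "\<omega> n < N" for n using g[OF xsX[of n]] by (simp add: \<omega>_def)
      have wx: "word_map tau \<omega> n (xs n) = x" for n
      proof (induction n)
        case 0 then show ?case by (simp add: xs0)
      next
        case (Suc n)
        have "tau (\<omega> n) (xs (Suc n)) = xs n" using g[OF xsX[of n]] by (simp add: \<omega>_def xsS)
        then show ?case using Suc by simp
      qed
      have \<omega>S: "\<omega> \<in> space S" using spS \<omega>N by simp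
      define W where "W n = word_map tau \<omega> n ` X" for n
      have xW: "x \<in> W n" for n unfolding W_def using wx[of n] xsX[of n] by (metis image_eqI)
      have Wint: "(\<Inter>n\<in>{1..}. W n) = {\<pi> \<omega>}" unfolding W_def using enc[OF \<omega>S] .
      have "x \<in> (\<Inter>n\<in>{1..}. W n)" using xW by blast
      then have px: "\<pi> \<omega> = x" unfolding Wint by simp
      have Wc: "compact (W n)" for n
        unfolding W_def using wm_cont[of N X tau \<omega> n] assms(2,3) \<omega>N
        by (intro compact_continuous_image assms(1)) auto
      have Wdec: "W (Suc n) \<subseteq> W n" for n
        unfolding W_def using assms(3)[OF \<omega>N[of n]] by (rule wm_Suc_sub)
      have Wmono: "m \<le> n \<Longrightarrow> W n \<subseteq> W m" for m n
        using lift_Suc_antimono_le[of W, OF Wdec] by blast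
      have "0 < emeasure \<nu> (U \<inter> X)" if U: "open U" "x \<in> U" for U
      proof -
        obtain n where n: "n \<ge> 1" "W n \<subseteq> U"
        proof -
          have cl: "closed (W i)" for i using Wc compact_imp_closed by blast
          have "(W 1 \<inter> -U) \<inter> (\<Inter>n\<in>{1..}. W n) = {}" using Wint U px by auto
          moreover have "compact (W 1 \<inter> -U)" using Wc U by (intro compact_Int_closed) auto
          ultimately obtain I' where I': "finite I'" "I' \<subseteq> {1..}" "(W 1 \<inter> -U) \<inter> (\<Inter>i\<in>I'. W i) = {}"
            using compact_imp_fip_image[of "W 1 \<inter> -U" "{1..}" W] cl by blast
          define m where "m = Max (insert 1 I')"
          have m1: "m \<ge> 1" using I' by (simp add: m_def)
          have "W m \<subseteq> W i" if "i \<in> I'" for i using I' that by (intro Wmono) (simp add: m_def)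
          moreover have "W m \<subseteq> W 1" using m1 by (intro Wmono)
          ultimately have "W m \<subseteq> U" using I'(3) by blast
          then show ?thesis using that m1 by blast
        qed
        define C where "C = {\<eta> \<in> space S. \<forall>i\<in>{..<n}. \<eta> i \<in> {\<omega> i}}"
        have UX: "U \<inter> X \<in> sets (restrict_space borel X)"
          using U by (auto simp: sets_restrict_space)
        have CS: "C \<subseteq> \<pi> -` (U \<inter> X) \<inter> space S"
        proof
          fix \<eta> assume \<eta>: "\<eta> \<in> C"
          then have \<eta>S: "\<eta> \<in> space S" by (simp add: C_def)
          have "word_map tau \<eta> n = word_map tau \<omega> n" using \<eta> by (intro wm_prefix) (auto simp: C_def)
          moreover have "\<pi> \<eta> \<in> word_map tau \<eta> n ` X" using enc[OF \<eta>S] n(1) by auto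
          ultimately have "\<pi> \<eta> \<in> W n" by (simp add: W_def)
          then show "\<eta> \<in> \<pi> -` (U \<inter> X) \<inter> space S" using n(2) piX[OF \<eta>S] \<eta>S by auto
        qed
        have "emeasure S C = (\<Prod>i\<in>{..<n}. emeasure M {\<omega> i})"
          unfolding C_def S_def using \<omega>N
          by (intro emeasure_PiM_Collect) (auto simp: M_def sets_point_measure)
        also have "\<dots> = (\<Prod>i\<in>{..<n}. ennreal (p (\<omega> i)))"
          using \<omega>N by (intro prod.cong refl) (simp add: M_def emeasure_point_measure_finite)
        also have "\<dots> = ennreal (\<Prod>i\<in>{..<n}. p (\<omega> i))"
          using assms(7) \<omega>N by (intro prod_ennreal) (simp add: less_imp_le)
        finally have "0 < emeasure S C"
          using assms(7) \<omega>N by (simp add: prod_pos)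
        also have "emeasure S C \<le> emeasure S (\<pi> -` (U \<inter> X) \<inter> space S)"
          using CS measurable_sets[OF piM UX] by (rule emeasure_mono)
        also have "\<dots> = emeasure \<nu> (U \<inter> X)"
          unfolding \<nu>_def using emeasure_distr[OF piM UX] by simp
        finally show ?thesis .
      qed
      then show "x \<in> measure_support X \<nu>" using x by (auto simp: measure_support_def)
    qed
  qed
  show ?thesis unfolding Let_def bS \<nu>_def[symmetric] using part1 part2 by blast
qed

end
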